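(* Let $\nu,k$ be integers with $2\nu-1\ge k\ge\nu-1\ge1$. Then $x=0$ is a zero of the polynomial $D(2\nu,k,x)$ of multiplicity exactly $N(2\nu,k)$.
   Context: For $n>k\ge1$ and $x\in\mathbb{R}$, $A(n,k,x)$ is the $n\times n$ skew-symmetric Toeplitz matrix whose first $k$ superdiagonals have all entries $1$ and whose remaining superdiagonal entries are all $-x$; $D(n,k,x)\in\mathbb{Z}[x]$ is its determinant. $N(n,k)$ is the nullity of $A(n,k,0)$. *)

theory Defs
  imports "Jordan_Normal_Form.Matrix_Kernel" "Jordan_Normal_Form.Determinant"
    "HOL-Computational_Algebra.Polynomial"
begin

definition skewA :: "nat \<Rightarrow> nat \<Rightarrow> 'a::comm_ring_1 \<Rightarrow> 'a mat" where
  "skewA n k x = mat n n (\<lambda>(i,j).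
     if i < j then (if j - i \<le> k then 1 else - x)
     else if j < i then (if i - j \<le> k then - 1 else x)
     else 0)"

definition D :: "nat \<Rightarrow> nat \<Rightarrow> int poly" where
  "D n k = det (skewA n k [:0, 1:])"

definition N :: "nat \<Rightarrow> nat \<Rightarrow> nat" where
  "N n k = kernel_dim (skewA n k (0::rat))"

end

theory Submission
  imports Defs
begin
definition ent :: "nat \<Rightarrow> 'a::comm_ring_1 \<Rightarrow> nat \<Rightarrow> nat \<Rightarrow> 'a" where
  "ent k x i j = (if i < j then (if j - i \<le> k then 1 else - x)
     else if j < i then (if i - j \<le> k then - 1 else x) else 0)"

definition rs :: "nat \<Rightarrow> nat \<Rightarrow> 'a::comm_ring_1 \<Rightarrow> (nat \<Rightarrow> 'a) \<Rightarrow> nat \<Rightarrow> 'a" where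
  "rs n k x f i = (\<Sum>j<n. ent k x i j * f j)"

lemma ent_diff:
  assumes "1 \<le> k"
  shows "ent k x (Suc i) j - ent k x i j =
    (if j = i then -1 else 0) + (if j = Suc i then -1 else 0)
    + (if j = i + 1 + k then 1 + x else 0) + (if j + k = i then 1 + x else 0)"
  using assms unfolding ent_def by (auto simp: algebra_simps)

lemma sum_delta_mult:
  "(\<Sum>j<(n::nat). (if j = c then a else 0) * f j) = (if c < n then a * f c else (0::'a::comm_ring_1))"
proof -
  have "(\<Sum>j<n. (if j = c then a else 0) * f j) = (\<Sum>j<n. (if j = c then a * f c else 0))"
    by (rule sum.cong) auto
  also have "\<dots> = (if c < n then a * f c else 0)" by (subst sum.delta; simp)
  finally show ?thesis .
qed

lemma rs_diff:
  assumes k: "1 \<le> k" and i: "Suc i < n"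
  shows "rs n k x f (Suc i) - rs n k x f i =
     - f i - f (Suc i) + (1 + x) * ((if i + 1 + k < n then f (i + 1 + k) else 0)
        + (if k \<le> i then f (i - k) else 0))"
proof -
  have "rs n k x f (Suc i) - rs n k x f i = (\<Sum>j<n. (ent k x (Suc i) j - ent k x i j) * f j)"
    unfolding rs_def by (simp add: sum_subtractf left_diff_distrib)
  also have "\<dots> = (\<Sum>j<n. (if j = i then -1 else 0) * f j + (if j = Suc i then -1 else 0) * f j
    + (if j = i + 1 + k then 1 + x else 0) * f j + (if j = i - k then (if k \<le> i then 1 + x else 0) else 0) * f j)"
    apply (rule sum.cong, simp)
    apply (subst ent_diff[OF k])
    by (auto simp: algebra_simps)
  also have "\<dots> = - f i - f (Suc i) + (1 + x) * ((if i + 1 + k < n then f (i + 1 + k) else 0)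
        + (if k \<le> i then f (i - k) else 0))"
    unfolding sum.distrib sum_delta_mult using i by (auto simp: algebra_simps)
  finally show ?thesis .
qed

lemma rs_zero_row:
  assumes "k < n"
  shows "rs n k 0 f 0 = (\<Sum>j\<in>{1..k}. f j)"
proof -
  have "rs n k 0 f 0 = (\<Sum>j<n. (if j \<in> {1..k} then f j else 0))"
    unfolding rs_def ent_def by (rule sum.cong) auto
  also have "\<dots> = (\<Sum>j\<in>{..<n} \<inter> {1..k}. f j)"
    by (simp add: sum.inter_restrict)
  also have "{..<n} \<inter> {1..k} = {1..k}" using assms by auto
  finally show ?thesis .
qed

definition inK :: "nat \<Rightarrow> nat \<Rightarrow> (nat \<Rightarrow> 'a::comm_ring_1) \<Rightarrow> bool" where
  "inK n k f = (\<forall>i<n. rs n k 0 f i = 0)"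

definition Eq :: "nat \<Rightarrow> nat \<Rightarrow> (nat \<Rightarrow> 'a::comm_ring_1) \<Rightarrow> nat \<Rightarrow> bool" where
  "Eq n k f i = (f i + f (Suc i) = (if i + 1 + k < n then f (i + 1 + k) else 0)
        + (if k \<le> i then f (i - k) else 0))"

lemma inK_Eq:
  assumes k: "1 \<le> k" and K: "inK n k f" and i: "Suc i < n"
  shows "Eq n k f i"
proof -
  have "rs n k 0 f (Suc i) - rs n k 0 f i = 0" using K i unfolding inK_def by auto
  then show ?thesis unfolding rs_diff[OF k i] Eq_def by (simp add: algebra_simps)
qed

lemma inK_R0:
  assumes "inK n k f" "k < n"
  shows "(\<Sum>j\<in>{1..k}. f j) = 0"
  using assms rs_zero_row[of k n f] unfolding inK_def by simp

lemma Eq_inK: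
  assumes k: "1 \<le> k" and kn: "k < n" and E: "\<And>i. Suc i < n \<Longrightarrow> Eq n k f i"
    and R: "(\<Sum>j\<in>{1..k}. f j) = 0"
  shows "inK n k f"
proof -
  have "i < n \<Longrightarrow> rs n k 0 f i = 0" for i
  proof (induction i)
    case 0 then show ?case using R by (simp add: rs_zero_row[OF kn])
  next
    case (Suc i)
    then have "rs n k 0 f (Suc i) - rs n k 0 f i = 0"
      using E[of i] unfolding rs_diff[OF k Suc(2)] Eq_def by (simp add: algebra_simps)
    then show ?case using Suc by simp
  qed
  then show ?thesis unfolding inK_def by auto
qed

locale cfg =
  fixes n k m :: nat
  assumes nkm: "n = k + 1 + m" and k1: "1 \<le> k" and mk: "m \<le> k + 1" and par: "odd (k + m)"
begin

lemma EqD: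
  assumes "inK n k f" "Suc i < n"
  shows "f i + f (Suc i) = (if i + 1 + k < n then f (i + 1 + k) else 0)
        + (if k \<le> i then f (i - k) else 0)"
  using inK_Eq[OF k1 assms] unfolding Eq_def .

lemma rec:
  assumes K: "inK n k f" and s: "1 \<le> s" "s < m" "s < k"
  shows "f (Suc s) = - f s - f (s - 1)"
proof -
  have nk: "\<not> k \<le> s - 1" using s by arith
  have a: "f (s-1) + f s = f (k+s)"
    using EqD[OF K, of "s-1"] s nkm nk by (simp add: add_ac)
  have b: "f s + f (Suc s) = f (k + Suc s)"
    using EqD[OF K, of "s"] s nkm by (simp add: add_ac)
  have c: "f (k+s) + f (k + Suc s) = f s"
    using EqD[OF K, of "k+s"] s nkm mk by (simp add: add_ac)
  have d: "f (Suc s) = f (k + Suc s) - f s" using b by (simp add: eq_diff_eq add.commute)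
  have e: "f (k + Suc s) = f s - f (k + s)" using c by (simp add: eq_diff_eq add.commute)
  show ?thesis unfolding d e a[symmetric] by (simp add: algebra_simps)
qed

lemma beta:
  assumes K: "inK n k f" and s: "1 \<le> s" "s \<le> m" "s \<le> k"
  shows "f (k + s) = f (s - 1) + f s"
proof -
  have nk: "\<not> k \<le> s - 1" using s by arith
  show ?thesis using EqD[OF K, of "s-1"] s nkm nk by (simp add: add_ac)
qed

lemma middle:
  assumes K: "inK n k f" and i: "m \<le> i" "i < k"
  shows "f (Suc i) = - f i"
  using EqD[OF K, of "i"] i nkm by (simp add: add_ac eq_neg_iff_add_eq_0)

lemma R0:
  assumes K: "inK n k f"
  shows "(\<Sum>j\<in>{1..k}. f j) = 0"
  using inK_R0[OF K] nkm by simp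

end

definition al :: "'a::comm_ring_1 \<Rightarrow> 'a \<Rightarrow> nat \<Rightarrow> 'a" where
  "al p q t = (if t mod 3 = 0 then p else if t mod 3 = 1 then q else - p - q)"

definition be :: "'a::comm_ring_1 \<Rightarrow> 'a \<Rightarrow> nat \<Rightarrow> 'a" where
  "be p q t = (if t mod 3 = 0 then - q else if t mod 3 = 1 then p + q else - p)"

lemma mod3_cases: "t mod 3 = 0 \<or> t mod 3 = 1 \<or> t mod 3 = (2::nat)" by arith

lemma al_rec: "al p q (Suc (Suc t)) = - al p q (Suc t) - al p q t"
  using mod3_cases[of t] by (auto simp: al_def mod_Suc algebra_simps)

lemma al_be: "al p q t + al p q (Suc t) = be p q (Suc t)"
  using mod3_cases[of t] by (auto simp: al_def be_def mod_Suc algebra_simps)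

lemma be_al: "be p q t + be p q (Suc t) = al p q t"
  using mod3_cases[of t] by (auto simp: al_def be_def mod_Suc algebra_simps)

lemma al_0[simp]: "al 0 0 t = 0" and be_0[simp]: "be 0 0 t = 0"
  by (auto simp: al_def be_def)

lemma sum_al: "(\<Sum>j\<in>{1..t}. al p q j) =
   (if t mod 3 = 0 then 0 else if t mod 3 = 1 then q else - p)"
proof (induction t)
  case 0 then show ?case by simp
next
  case (Suc t)
  have "(\<Sum>j\<in>{1..Suc t}. al p q j) = (\<Sum>j\<in>{1..t}. al p q j) + al p q (Suc t)"
    by simp
  then show ?case using Suc mod3_cases[of t] by (auto simp: al_def mod_Suc algebra_simps)
qed

lemma sum_alt: "(\<Sum>j\<in>{a..<a + 2 * r}. (-1) ^ (j - a) * (q::'a::comm_ring_1)) = 0"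
proof (induction r)
  case 0 then show ?case by simp
next
  case (Suc r)
  have "{a..<a + 2 * Suc r} = {a..<a + 2 * r} \<union> {a + 2 * r, Suc (a + 2 * r)}" by auto
  moreover have "(-1) ^ (Suc (a + 2 * r) - a) * q + (-1) ^ (a + 2 * r - a) * q = 0"
    by (simp add: Suc_diff_le)
  ultimately show ?case using Suc by (simp add: algebra_simps)
qed

context cfg
begin

lemma alpha:
  assumes K: "inK n k f" and t: "t < m \<or> (t = m \<and> m \<le> k)"
  shows "f t = al (f 0) (f 1) t"
  using t
proof (induction t rule: nat_less_induct)
  case (1 t)
  show ?case
  proof (cases t)
    case 0 then show ?thesis by (simp add: al_def)
  next
    case (Suc t1)
    show ?thesis
    proof (cases t1)
      case 0 then show ?thesis using Suc by (simp add: al_def)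
    next
      case (Suc s)
      have ht: "t = Suc (Suc s)" using \<open>t = Suc t1\<close> Suc by simp
      have c1: "Suc s < m" "Suc s < k" using "1.prems" ht mk by auto
      have r: "f (Suc (Suc s)) = - f (Suc s) - f s"
        using rec[OF K, of "Suc s"] c1 by simp
      have i1: "f (Suc s) = al (f 0) (f 1) (Suc s)" using "1.IH"[rule_format, of "Suc s"] c1 ht by simp
      have i2: "f s = al (f 0) (f 1) s" using "1.IH"[rule_format, of "s"] c1 ht by simp
      show ?thesis unfolding ht r i1 i2 al_rec ..
    qed
  qed
qed

lemma beta':
  assumes K: "inK n k f" and s: "1 \<le> s" "s \<le> m" "s \<le> k" "s < m \<or> m \<le> k"
  shows "f (k + s) = be (f 0) (f 1) s"
proof -
  have s1: "s - 1 < m" using s by arith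
  have s2: "s < m \<or> s = m \<and> m \<le> k" using s by arith
  note a1 = alpha[OF K disjI1[OF s1]] and a2 = alpha[OF K s2]
  have "f (k + s) = f (s - 1) + f s" by (rule beta[OF K s(1-3)])
  also have "f (s - 1) = al (f 0) (f 1) (s - 1)" by (rule a1)
  also have "f s = al (f 0) (f 1) s" by (rule a2)
  also have "al (f 0) (f 1) (s - 1) + al (f 0) (f 1) s = be (f 0) (f 1) s"
    using al_be[of "f 0" "f 1" "s - 1"] s by simp
  finally show ?thesis .
qed

lemma fk:
  assumes K: "inK n k f" and m1: "1 \<le> m" and ne: "m \<le> k"
  shows "f k = - f 1"
proof -
  have "f k + f (Suc k) = f 0"
    using EqD[OF K, of k] nkm m1 ne by simp
  moreover have "f (Suc k) = f 0 + f 1"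
    using beta'[OF K, of 1] m1 ne k1 by (simp add: be_def)
  ultimately show ?thesis by (simp add: algebra_simps eq_neg_iff_add_eq_0)
qed

lemma mid:
  assumes K: "inK n k f" and m1: "1 \<le> m" and ne: "m \<le> k" and t: "m \<le> t" "t \<le> k"
  shows "f t = (-1) ^ (t - m) * f 1"
proof -
  have odd: "odd (k - m)"
  proof -
    have "k + m = (k - m) + 2 * m" using ne by simp
    then show ?thesis using par by simp
  qed
  have H: "\<forall>d. d \<le> k - m \<longrightarrow> f (k - d) = (-1) ^ (k - d - m) * f 1"
  proof (intro allI impI)
    fix d assume "d \<le> k - m"
    then show "f (k - d) = (-1) ^ (k - d - m) * f 1"
    proof (induction d)
      case 0 then show ?case using fk[OF K m1 ne] odd by simp
    next
      case (Suc d)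
      have i: "m \<le> k - Suc d" "k - Suc d < k" using Suc.prems by auto
      have e: "f (Suc (k - Suc d)) = - f (k - Suc d)" by (rule middle[OF K i])
      have e2: "Suc (k - Suc d) = k - d" using Suc.prems by auto
      have e3: "k - d - m = Suc (k - Suc d - m)" using Suc.prems by auto
      have "f (k - Suc d) = - f (k - d)" using e e2 by simp
      then show ?case using Suc e3 by simp
    qed
  qed
  have "k - t \<le> k - m" using t by simp
  note h = H[rule_format, OF this]
  have "k - (k - t) = t" using t by simp
  then show ?thesis using h by simp
qed

lemma R0_nonedge:
  assumes K: "inK n k f" and m1: "1 \<le> m" and ne: "m \<le> k"
  shows "(\<Sum>j\<in>{1..m-1}. al (f 0) (f 1) j) = 0"
proof -
  have ev: "even (k + 1 - m)"
  proof -
    have "k + m = (k + 1 - m) + 2 * m - 1" using ne by simp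
    then show ?thesis using par ne by presburger
  qed
  from ev obtain r where r: "k + 1 - m = 2 * r" by (rule evenE)
  have split: "{1..k} = {1..m-1} \<union> {m..<m + 2 * r}" using r m1 ne by auto
  have "(\<Sum>j\<in>{1..k}. f j) = (\<Sum>j\<in>{1..m-1}. f j) + (\<Sum>j\<in>{m..<m + 2 * r}. f j)"
    unfolding split by (rule sum.union_disjoint) auto
  also have "(\<Sum>j\<in>{1..m-1}. f j) = (\<Sum>j\<in>{1..m-1}. al (f 0) (f 1) j)"
    apply (rule sum.cong, simp) apply (rule alpha[OF K]) using m1 by auto
  also have "(\<Sum>j\<in>{m..<m + 2 * r}. f j) = (\<Sum>j\<in>{m..<m + 2 * r}. (-1) ^ (j - m) * f 1)"
    by (rule sum.cong) (use mid[OF K m1 ne] r in auto)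
  also have "\<dots> = 0" by (rule sum_alt)
  finally show ?thesis using R0[OF K] by simp
qed

lemma R0_edge:
  assumes K: "inK n k f" and e: "k + 1 = m"
  shows "(\<Sum>j\<in>{1..m-1}. al (f 0) (f 1) j) = 0"
proof -
  have "(\<Sum>j\<in>{1..m-1}. al (f 0) (f 1) j) = (\<Sum>j\<in>{1..k}. f j)"
  proof (rule sum.cong)
    show "{1..m-1} = {1..k}" using e by auto
  next
    fix j assume "j \<in> {1..k}"
    then have "j < m" using e by simp
    then show "al (f 0) (f 1) j = f j" using alpha[OF K, of j] by simp
  qed
  then show ?thesis using R0[OF K] by simp
qed

lemma edge_facts:
  assumes K: "inK n k f" and e: "k + 1 = m"
  shows "be (f 0) (f 1) (m - 1) + be (f 0) (f 1) 1 = f 0"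
    and "f (n - 1) = al (f 0) (f 1) (m - 1) - be (f 0) (f 1) (m - 1)"
proof -
  have m2: "2 \<le> m" using e k1 by simp
  have em: "m = Suc k" using e by simp
  have a: "f (k + (m - 1)) + f (k + m) = f (m - 1)"
    using EqD[OF K, of "k + k"] nkm em k1 by (simp add: add_ac)
  have b: "f k + f (Suc k) = f (k + m) + f 0"
    using EqD[OF K, of k] nkm em by (simp add: add_ac)
  have fk: "f k = al (f 0) (f 1) (m - 1)" using alpha[OF K, of k] em by simp
  have fk1: "f (Suc k) = be (f 0) (f 1) 1" using beta'[OF K, of 1] em m2 k1 by simp
  have fkm: "f (k + (m - 1)) = be (f 0) (f 1) (m - 1)" using beta'[OF K, of "m - 1"] em m2 by simp
  have nm: "n - 1 = k + m" using nkm by simp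
  have km: "m - 1 = k" using em by simp
  note a b fk fk1 fkm
  then have a': "f (k + k) + f (k + m) = f k" and fk': "f k = al (f 0) (f 1) k"
    and fkm': "f (k + k) = be (f 0) (f 1) k" unfolding km by auto
  show "f (n - 1) = al (f 0) (f 1) (m - 1) - be (f 0) (f 1) (m - 1)"
    using a' fk' fkm' nm unfolding km by (simp add: algebra_simps eq_diff_eq)
  have x: "f (k + m) = al (f 0) (f 1) k - be (f 0) (f 1) k" using a' fkm' fk' by (simp add: eq_diff_eq add.commute)
  have b': "al (f 0) (f 1) k + be (f 0) (f 1) 1 = f 0 + f (k + m)" using b fk' fk1 by simp
  have "be (f 0) (f 1) k + be (f 0) (f 1) 1 = (al (f 0) (f 1) k + be (f 0) (f 1) 1) - (al (f 0) (f 1) k - be (f 0) (f 1) k)"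
    by (simp add: algebra_simps)
  also have "\<dots> = f 0" unfolding b' x[symmetric] by simp
  finally show "be (f 0) (f 1) (m - 1) + be (f 0) (f 1) 1 = f 0" unfolding km .
qed

end

lemma mod3_pred:
  assumes "1 \<le> (m::nat)"
  shows "(m mod 3 = 1 \<longleftrightarrow> (m - 1) mod 3 = 0) \<and> (m mod 3 = 2 \<longleftrightarrow> (m - 1) mod 3 = 1)
     \<and> (m mod 3 = 0 \<longleftrightarrow> (m - 1) mod 3 = 2)"
proof -
  obtain m' where m': "m = Suc m'" using assms by (cases m) auto
  show ?thesis unfolding m' using mod3_cases[of m'] by (auto simp: mod_Suc)
qed

lemma mod3_1_pos: "m mod 3 = (1::nat) \<Longrightarrow> 1 \<le> m"
  by (cases m) auto

context cfg
begin

lemma all_zero: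
  assumes K: "inK n k f" and m1: "1 \<le> m" and z: "f 0 = 0" "f 1 = 0" and t: "t < n"
  shows "f t = 0"
proof -
  consider (a) "t < m" | (b) "m \<le> t" "t \<le> k" | (c) "k < t" "t - k < m \<or> m \<le> k" | (d) "k < t" "t - k = m" "k + 1 = m"
    using t nkm mk by linarith
  then show ?thesis
  proof cases
    case a then show ?thesis using alpha[OF K, of t] z by simp
  next
    case b then show ?thesis using mid[OF K m1 _ b] z by simp
  next
    case c
    have "f (k + (t - k)) = be (f 0) (f 1) (t - k)"
      by (rule beta'[OF K]) (use c t nkm mk in auto)
    then show ?thesis using c z by simp
  next
    case d
    have "t = n - 1" using d nkm by simp
    then show ?thesis using edge_facts(2)[OF K d(3)] z by simp
  qed
qed

lemma zero01:
  assumes K: "inK n k f" and m1: "1 \<le> m" and m3: "m mod 3 \<noteq> 1"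
  shows "f 0 = 0 \<and> f 1 = 0"
proof -
  have mm: "(m mod 3 = 0 \<and> (m - 1) mod 3 = 2) \<or> (m mod 3 = 2 \<and> (m - 1) mod 3 = 1)"
    using m3 mod3_pred[OF m1] mod3_cases[of m] by auto
  show ?thesis
  proof (cases "m \<le> k")
    case True
    have c1: "al (f 0) (f 1) m = f 1"
      using alpha[OF K, of m] mid[OF K m1 True, of m] True by simp
    have c2: "(\<Sum>j\<in>{1..m-1}. al (f 0) (f 1) j) = 0" by (rule R0_nonedge[OF K m1 True])
    show ?thesis using c1 c2 mm unfolding sum_al by (auto simp: al_def)
  next
    case False
    then have e: "k + 1 = m" using mk by simp
    have c1: "be (f 0) (f 1) (m - 1) + be (f 0) (f 1) 1 = f 0" by (rule edge_facts(1)[OF K e])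
    have c2: "(\<Sum>j\<in>{1..m-1}. al (f 0) (f 1) j) = 0" by (rule R0_edge[OF K e])
    show ?thesis using c1 c2 mm unfolding sum_al by (auto simp: al_def be_def)
  qed
qed

lemma zero_m0:
  assumes K: "inK n k f" and m0: "m = 0" and t: "t < n"
  shows "f t = 0"
proof -
  have P: "t \<le> k \<Longrightarrow> f t = (-1) ^ t * f 0" for t
  proof (induction t)
    case 0 then show ?case by simp
  next
    case (Suc t)
    have "f t + f (Suc t) = 0" using EqD[OF K, of t] Suc.prems nkm m0 by simp
    then show ?case using Suc by (simp add: eq_neg_iff_add_eq_0[symmetric] add.commute)
  qed
  have "odd k" using par m0 by simp
  then obtain r where r: "k = 2 * r + 1" by (rule oddE)
  have split: "{1..k} = {1..<1 + 2 * r} \<union> {k}" using r by auto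
  have "(\<Sum>j\<in>{1..k}. f j) = (\<Sum>j\<in>{1..<1 + 2 * r}. f j) + f k"
    unfolding split by (subst sum.union_disjoint) (use r in auto)
  also have "(\<Sum>j\<in>{1..<1 + 2 * r}. f j) = (\<Sum>j\<in>{1..<1 + 2 * r}. (-1) ^ (j - 1) * (- f 0))"
  proof (rule sum.cong)
    fix j assume j: "j \<in> {1..<1 + 2 * r}"
    then have "j \<le> k" using r by simp
    then have "f j = (-1) ^ j * f 0" by (rule P)
    moreover obtain j' where j': "j = Suc j'" using j by (cases j) auto
    ultimately show "f j = (-1) ^ (j - 1) * (- f 0)" by simp
  qed simp
  also have "\<dots> = 0" by (rule sum_alt)
  also have "f k = - f 0" using P[of k] \<open>odd k\<close> by simp
  finally have "f 0 = 0" using R0[OF K] by simp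
  then show ?thesis using P[of t] t nkm m0 by simp
qed

lemma KZ:
  assumes K: "inK n k f" and m3: "m mod 3 \<noteq> 1" and t: "t < n"
  shows "f t = 0"
proof (cases "m = 0")
  case True then show ?thesis using zero_m0[OF K True t] by simp
next
  case False
  then have m1: "1 \<le> m" by simp
  show ?thesis using zero01[OF K m1 m3] all_zero[OF K m1 _ _ t] by simp
qed

lemma KL:
  assumes K: "inK n k f" and m3: "m mod 3 = 1" and z: "f (n - 2) = 0" "f (n - 1) = 0"
    and t: "t < n"
  shows "f t = 0"
proof -
  have m1: "1 \<le> m" using m3 by (rule mod3_1_pos)
  have mm: "(m - 1) mod 3 = 0" using m3 mod3_pred[OF m1] by simp
  have A: "f (n - 1) = f 0 + f 1"
  proof (cases "m \<le> k")
    case True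
    have "f (k + m) = be (f 0) (f 1) m" by (rule beta'[OF K]) (use m1 True in auto)
    then show ?thesis using nkm m3 by (simp add: be_def)
  next
    case False
    then have e: "k + 1 = m" using mk by simp
    show ?thesis using edge_facts(2)[OF K e] mm by (simp add: al_def be_def)
  qed
  have B: "f (n - 2) = - f 1"
  proof (cases "m = 1")
    case True
    then have ek: "even k" using par by simp
    then have k2: "2 \<le> k" using k1 by (cases "k = 1") auto
    have "f k = (-1) ^ (k - 1) * f 1" using mid[OF K m1, of k] True k1 by simp
    moreover have "odd (k - 1)" using ek k2 by simp
    ultimately show ?thesis using True nkm by simp
  next
    case False
    then have "2 \<le> m" using m1 by simp
    have "f (k + (m - 1)) = be (f 0) (f 1) (m - 1)"
      by (rule beta'[OF K]) (use \<open>2 \<le> m\<close> mk in auto)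
    moreover have "n - 2 = k + (m - 1)" using nkm \<open>2 \<le> m\<close> by simp
    ultimately show ?thesis using mm by (simp add: be_def)
  qed
  have "f 1 = 0" using B z by simp
  moreover have "f 0 = 0" using A z \<open>f 1 = 0\<close> by simp
  ultimately show ?thesis using all_zero[OF K m1 _ _ t] by simp
qed

end

definition kv :: "nat \<Rightarrow> nat \<Rightarrow> 'a::comm_ring_1 \<Rightarrow> 'a \<Rightarrow> nat \<Rightarrow> 'a" where
  "kv m k p q t = (if t < m then al p q t else if t \<le> k then (-1) ^ (t - m) * q else be p q (t - k))"

context cfg
begin

lemma kv_al: "t < m \<Longrightarrow> kv m k p q t = al p q t" by (simp add: kv_def)
lemma kv_mid: "m \<le> t \<Longrightarrow> t \<le> k \<Longrightarrow> kv m k p q t = (-1) ^ (t - m) * q" by (simp add: kv_def)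
lemma kv_be: "k < t \<Longrightarrow> kv m k p q t = be p q (t - k)" using mk by (simp add: kv_def)

lemma odd_km: "m \<le> k \<Longrightarrow> odd (k - m)"
proof -
  assume ne: "m \<le> k"
  have "k + m = (k - m) + 2 * m" using ne by simp
  then show ?thesis using par by simp
qed

lemma kv_last:
  assumes m1: "1 \<le> m" and m3: "m mod 3 = 1"
  shows "kv m k p q (n - 1) = p + q" "kv m k p q (n - 2) = - q"
proof -
  have mm: "(m - 1) mod 3 = 0" using m3 mod3_pred[OF m1] by simp
  have "n - 1 = k + m" using nkm by simp
  then show "kv m k p q (n - 1) = p + q" using m1 mk m3 by (simp add: kv_def be_def)
  show "kv m k p q (n - 2) = - q"
  proof (cases "m = 1")
    case True
    then have "odd (k - 1)" using odd_km k1 by simp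
    moreover have "n - 2 = k" using nkm True by simp
    ultimately show ?thesis using True k1 by (simp add: kv_def)
  next
    case False
    then have t: "n - 2 = k + (m - 1)" "2 \<le> m" using nkm m1 by auto
    have "kv m k p q (k + (m - 1)) = be p q (k + (m - 1) - k)" by (rule kv_be) (use t in simp)
    then show ?thesis using mm t by (simp add: be_def)
  qed
qed

lemma kv_in:
  assumes m3: "m mod 3 = 1"
  shows "inK n k (kv m k p q)"
proof -
  let ?f = "kv m k p q"
  have m1: "1 \<le> m" using m3 by (rule mod3_1_pos)
  have mm: "(m - 1) mod 3 = 0" using m3 mod3_pred[OF m1] by simp
  have E: "Eq n k ?f i" if i: "Suc i < n" for i
  proof -
    consider (a) "Suc i < m" | (b) "Suc i = m" "m \<le> k" | (c) "m \<le> i" "i < k"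
      | (d) "i = k" "m \<le> k" | (e) "i = k" "k + 1 = m" | (f) "k < i"
      using mk by linarith
    then show ?thesis
    proof cases
      case a
      have "?f i + ?f (Suc i) = al p q i + al p q (Suc i)" using a by (simp add: kv_def)
      also have "\<dots> = be p q (Suc i)" by (rule al_be)
      also have "\<dots> = ?f (i + 1 + k)" using a mk by (simp add: kv_def)
      finally show ?thesis unfolding Eq_def using a nkm mk by simp
    next
      case b
      have "i = m - 1" using b by simp
      then have "i mod 3 = 0" using mm by simp
      then have "?f i = p" using b by (simp add: kv_def al_def)
      moreover have "?f (Suc i) = q" using b by (simp add: kv_def)
      moreover have "?f (i + 1 + k) = p + q" using b m3 by (simp add: kv_def be_def)
      ultimately show ?thesis unfolding Eq_def using b nkm by simp
    next
      case c
      have "?f i = (-1) ^ (i - m) * q" using c by (simp add: kv_def)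
      moreover have "?f (Suc i) = - ((-1) ^ (i - m) * q)" using c by (simp add: kv_def Suc_diff_le)
      ultimately show ?thesis unfolding Eq_def using c nkm by simp
    next
      case d
      have "?f i = - q" using d odd_km m1 by (simp add: kv_def)
      moreover have "?f (Suc i) = p + q" using d by (simp add: kv_def be_def)
      moreover have "?f 0 = p" using m1 by (simp add: kv_def al_def)
      ultimately show ?thesis unfolding Eq_def using d nkm by simp
    next
      case e
      have "i = m - 1" using e by simp
      then have "i mod 3 = 0" using mm by simp
      then have "?f i = p" using e by (simp add: kv_def al_def)
      moreover have "?f (Suc i) = p + q" using kv_be[of "Suc i" p q] e by (simp add: be_def)
      moreover have "?f (i + 1 + k) = p + q"
      proof -
        have em: "m = Suc k" "i = k" using e by auto
        have "?f (i + 1 + k) = be p q (i + 1 + k - k)" by (rule kv_be) (use em in simp)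
        then show ?thesis using em m3 by (simp add: be_def)
      qed
      moreover have "?f 0 = p" using m1 by (simp add: kv_def al_def)
      moreover have "i + 1 + k < n" using e nkm by simp
      moreover have "i = k" "Suc i = i + 1" using e by auto
      ultimately show ?thesis unfolding Eq_def by simp
    next
      case f
      have "?f i + ?f (Suc i) = be p q (i - k) + be p q (Suc (i - k))"
        using f mk by (simp add: kv_def Suc_diff_le)
      also have "\<dots> = al p q (i - k)" by (rule be_al)
      also have "\<dots> = ?f (i - k)"
      proof -
        have "i - k < m" using f i nkm by simp
        then show ?thesis by (simp add: kv_al)
      qed
      finally show ?thesis unfolding Eq_def using f nkm mk by simp
    qed
  qed
  have R: "(\<Sum>j\<in>{1..k}. ?f j) = 0"
  proof (cases "m \<le> k")
    case True
    have ev: "even (k + 1 - m)" using odd_km[OF True] True by (simp add: Suc_diff_le)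
    from ev obtain r where r: "k + 1 - m = 2 * r" by (rule evenE)
    have split: "{1..k} = {1..m-1} \<union> {m..<m + 2 * r}" using r m1 True by auto
    have "(\<Sum>j\<in>{1..k}. ?f j) = (\<Sum>j\<in>{1..m-1}. ?f j) + (\<Sum>j\<in>{m..<m + 2 * r}. ?f j)"
      unfolding split by (rule sum.union_disjoint) auto
    also have "(\<Sum>j\<in>{1..m-1}. ?f j) = (\<Sum>j\<in>{1..m-1}. al p q j)"
      by (rule sum.cong) (use m1 in \<open>auto simp: kv_def\<close>)
    also have "\<dots> = 0" unfolding sum_al using mm by simp
    also have "(\<Sum>j\<in>{m..<m + 2 * r}. ?f j) = (\<Sum>j\<in>{m..<m + 2 * r}. (-1) ^ (j - m) * q)"
      by (rule sum.cong) (use r True in \<open>auto simp: kv_def\<close>)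
    also have "\<dots> = 0" by (rule sum_alt)
    finally show ?thesis by simp
  next
    case False
    then have e: "k + 1 = m" using mk by simp
    have "(\<Sum>j\<in>{1..k}. ?f j) = (\<Sum>j\<in>{1..k}. al p q j)"
      by (rule sum.cong) (use e in \<open>auto simp: kv_def\<close>)
    also have "\<dots> = 0"
    proof -
      have "k = m - 1" using e by simp
      then have "k mod 3 = 0" using mm by simp
      then show ?thesis unfolding sum_al by simp
    qed
    finally show ?thesis .
  qed
  show ?thesis
    by (rule Eq_inK[OF k1 _ E R]) (use nkm m1 in auto)
qed

end

definition bent :: "nat \<Rightarrow> nat \<Rightarrow> nat \<Rightarrow> 'a::comm_ring_1" where
  "bent k i j = (if i + k < j then -1 else 0) + (if j + k < i then 1 else 0)"

definition bs :: "nat \<Rightarrow> nat \<Rightarrow> (nat \<Rightarrow> 'a::comm_ring_1) \<Rightarrow> nat \<Rightarrow> 'a" where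
  "bs n k f i = (\<Sum>j<n. bent k i j * f j)"

lemma ent_split: "ent k x i j = ent k 0 i j + x * bent k i j"
  unfolding ent_def bent_def by auto

lemma rs_split: "rs n k x f i = rs n k 0 f i + x * bs n k f i"
  unfolding rs_def bs_def
  by (subst ent_split) (simp add: sum.distrib algebra_simps sum_distrib_left)

lemma ent_skew: "ent k x i j = - ent k x j i"
  unfolding ent_def by auto

lemma bent_skew: "bent k i j = - bent k j i"
  unfolding bent_def by auto

lemma skew_sum:
  fixes E :: "nat \<Rightarrow> nat \<Rightarrow> 'a::comm_ring_1"
  assumes "\<And>i j. E i j = - E j i"
  shows "(\<Sum>i<n. u i * (\<Sum>j<n. E i j * w j)) = - (\<Sum>j<n. w j * (\<Sum>i<n. E j i * u i))"
proof -
  have "(\<Sum>i<n. u i * (\<Sum>j<n. E i j * w j)) = (\<Sum>i<n. \<Sum>j<n. u i * E i j * w j)"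
    by (simp add: sum_distrib_left mult.assoc)
  also have "\<dots> = (\<Sum>j<n. \<Sum>i<n. u i * E i j * w j)" by (rule sum.swap)
  also have "\<dots> = (\<Sum>j<n. \<Sum>i<n. - (w j * E j i * u i))"
    by (intro sum.cong refl) (subst assms, simp add: algebra_simps)
  also have "\<dots> = - (\<Sum>j<n. w j * (\<Sum>i<n. E j i * u i))"
    by (simp add: sum_distrib_left mult.assoc sum_negf)
  finally show ?thesis .
qed

lemma bs_alt:
  assumes i: "i < n"
  shows "bs n k f i = - (\<Sum>j\<in>{i + k + 1..<n}. f j) + (\<Sum>j<i - k. f j)"
proof -
  have "bs n k f i = (\<Sum>j<n. (if i + k < j then - f j else 0) + (if j + k < i then f j else 0))"
    unfolding bs_def bent_def by (intro sum.cong refl) (auto simp: algebra_simps)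
  also have "\<dots> = (\<Sum>j<n. (if i + k < j then - f j else 0)) + (\<Sum>j<n. (if j + k < i then f j else 0))"
    by (rule sum.distrib)
  also have "(\<Sum>j<n. (if i + k < j then - f j else 0)) = (\<Sum>j\<in>{..<n} \<inter> {j. i + k < j}. - f j)"
    by (simp add: sum.inter_restrict)
  also have "{..<n} \<inter> {j. i + k < j} = {i + k + 1..<n}" by auto
  also have "(\<Sum>j<n. (if j + k < i then f j else 0)) = (\<Sum>j\<in>{..<n} \<inter> {j. j + k < i}. f j)"
    by (simp add: sum.inter_restrict)
  also have "{..<n} \<inter> {j. j + k < i} = {..<i - k}" using i by auto
  finally show ?thesis by (simp add: sum_negf)
qed

definition g10 :: "nat \<Rightarrow> int" where "g10 t = (if t mod 3 = 2 then 1 else 0)"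
definition h10 :: "nat \<Rightarrow> int" where "h10 t = (if t mod 3 = 0 then 0 else 1)"

lemma be10: "be 1 0 s = g10 (Suc s) - g10 s"
  using mod3_cases[of s] by (auto simp: be_def g10_def mod_Suc)

lemma al10: "al 1 0 s = h10 (Suc s) - h10 s"
  using mod3_cases[of s] by (auto simp: al_def h10_def mod_Suc)

context cfg
begin

lemma cterm:
  assumes m3: "m mod 3 = 1" and i: "i < n"
  shows "kv m k (1::int) (-1) i * bs n k (kv m k 1 0) i \<le> (if i = 0 then -1 else 0)"
proof -
  have m1: "1 \<le> m" using m3 by (rule mod3_1_pos)
  let ?K1 = "kv m k (1::int) (-1)" and ?K2 = "kv m k (1::int) 0"
  consider (a) "i < m" | (b) "m \<le> i" "i \<le> k" | (c) "k < i" using mk by linarith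
  then show ?thesis
  proof cases
    case a
    have S1: "(\<Sum>j\<in>{i + k + 1..<n}. ?K2 j) = g10 (Suc m) - g10 (Suc i)"
    proof -
      have eq: "{i + k + 1..<n} = {Suc i + k..<Suc m + k}" using nkm by auto
      have "(\<Sum>j\<in>{i + k + 1..<n}. ?K2 j) = (\<Sum>j\<in>{Suc i + k..<Suc m + k}. ?K2 j)"
        unfolding eq ..
      also have "\<dots> = (\<Sum>s\<in>{Suc i..<Suc m}. ?K2 (s + k))"
        by (rule sum.shift_bounds_nat_ivl)
      also have "\<dots> = (\<Sum>s\<in>{Suc i..<Suc m}. g10 (Suc s) - g10 s)"
        by (intro sum.cong refl) (auto simp: kv_be be10)
      also have "\<dots> = g10 (Suc m) - g10 (Suc i)" using a by (intro sum_Suc_diff') simp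
      finally show ?thesis .
    qed
    have S2: "i - k = 0" using a mk by simp
    have "bs n k ?K2 i = - (g10 (Suc m) - g10 (Suc i))"
      using bs_alt[OF i, of k ?K2] S1 S2 by simp
    moreover have "?K1 i = al 1 (-1) i" using a by (simp add: kv_al)
    moreover have "g10 (Suc m) = 1" using m3 by (simp add: g10_def mod_Suc)
    ultimately show ?thesis
      using mod3_cases[of i] by (auto simp: al_def g10_def mod_Suc)
  next
    case b
    have "{i + k + 1..<n} = {}" using b nkm by auto
    moreover have "i - k = 0" using b by simp
    ultimately have "bs n k ?K2 i = 0" using bs_alt[OF i, of k ?K2] by simp
    then show ?thesis using b m1 by simp
  next
    case c
    have e1: "{i + k + 1..<n} = {}" using c nkm mk by auto
    have "(\<Sum>j<i - k. ?K2 j) = (\<Sum>j<i - k. h10 (Suc j) - h10 j)"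
    proof (intro sum.cong refl)
      fix j assume "j \<in> {..<i - k}"
      then have "j < m" using c i nkm by auto
      then show "?K2 j = h10 (Suc j) - h10 j" by (simp add: kv_al al10)
    qed
    also have "\<dots> = h10 (i - k) - h10 0" by (rule sum_lessThan_telescope)
    finally have "bs n k ?K2 i = h10 (i - k)"
      using bs_alt[OF i, of k ?K2] e1 by (simp add: h10_def)
    moreover have "?K1 i = be 1 (-1) (i - k)" using c by (simp add: kv_be)
    ultimately show ?thesis
      using mod3_cases[of "i - k"] c by (auto simp: be_def h10_def)
  qed
qed

lemma c_neg:
  assumes m3: "m mod 3 = 1"
  shows "(\<Sum>i<n. kv m k (1::int) (-1) i * bs n k (kv m k 1 0) i) < 0"
proof -
  have "(\<Sum>i<n. kv m k (1::int) (-1) i * bs n k (kv m k 1 0) i) \<le> (\<Sum>i<n. (if i = 0 then -1 else 0))"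
    by (intro sum_mono cterm[OF m3]) simp
  also have "\<dots> = -1" using nkm by (simp add: sum.delta)
  finally show ?thesis by simp
qed

end

lemma skewA_eq: "skewA n k x = mat n n (\<lambda>(i,j). ent k x i j)"
  unfolding skewA_def ent_def by simp

lemma skewA_carrier[simp]: "skewA n k x \<in> carrier_mat n n"
  unfolding skewA_eq by simp

lemma skewA_index[simp]: "i < n \<Longrightarrow> j < n \<Longrightarrow> skewA n k x $$ (i,j) = ent k x i j"
  unfolding skewA_eq by simp

lemma skewA_mult_vec:
  assumes v: "v \<in> carrier_vec n" and i: "i < n"
  shows "(skewA n k x *\<^sub>v v) $ i = rs n k x (\<lambda>j. v $ j) i"
  using v i unfolding rs_def skewA_eq by (simp add: scalar_prod_def lessThan_atLeast0)

lemma (in comm_ring_hom) hom_ent: "hom (ent k x i j) = ent k (hom x) i j"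
  unfolding ent_def by (simp add: hom_distribs)

lemma (in comm_ring_hom) hom_bent: "hom (bent k i j) = bent k i j"
  unfolding bent_def by (simp add: hom_distribs)

lemma (in comm_ring_hom) hom_bs: "hom (bs n k f i) = bs n k (\<lambda>t. hom (f t)) i"
  unfolding bs_def by (simp add: hom_distribs hom_bent)

lemma (in comm_ring_hom) hom_kv: "hom (kv m k p q t) = kv m k (hom p) (hom q) t"
  unfolding kv_def al_def be_def by (simp add: hom_distribs)

lemma (in comm_ring_hom) map_skewA: "map_mat hom (skewA n k x) = skewA n k (hom x)"
  unfolding skewA_eq by (rule eq_matI) (auto simp: hom_ent)

lemma det_nz_kernel_dim:
  assumes A: "(A :: 'a :: field mat) \<in> carrier_mat n n" and d: "det A \<noteq> 0"
  shows "kernel.dim n A = 0"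
proof -
  from det_non_zero_imp_unit[OF A d, unfolded Units_def, of "()"]
    obtain B where B: "B \<in> carrier_mat n n" and BA: "B * A = 1\<^sub>m n" and AB: "A * B = 1\<^sub>m n"
    by (auto simp: ring_mat_def)
  from mat_kernel_mult_eq[OF A B A AB, unfolded BA]
  have id: "mat_kernel A = mat_kernel (1\<^sub>m n)" ..
  show "kernel.dim n A = 0"
    unfolding id by (rule kernel_one_mat)
qed

lemma kernel_dim_eq: "A \<in> carrier_mat n n \<Longrightarrow> kernel_dim A = kernel.dim n A"
  unfolding kernel_dim_def by simp

context cfg
begin

lemma det_A0_nz:
  assumes m3: "m mod 3 \<noteq> 1"
  shows "det (skewA n k (0 :: 'a :: idom)) \<noteq> 0"
proof
  assume "det (skewA n k (0 :: 'a)) = 0"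
  moreover have iff: "det (skewA n k (0::'a)) = 0 \<longleftrightarrow>
    (\<exists>v. v \<in> carrier_vec n \<and> v \<noteq> 0\<^sub>v n \<and> skewA n k (0::'a) *\<^sub>v v = 0\<^sub>v n)"
    by (rule det_0_iff_vec_prod_zero) simp
  ultimately have "\<exists>v. v \<in> carrier_vec n \<and> v \<noteq> 0\<^sub>v n \<and> skewA n k (0::'a) *\<^sub>v v = 0\<^sub>v n"
    by blast
  then obtain v where v: "v \<in> carrier_vec n" "v \<noteq> 0\<^sub>v n" "skewA n k (0::'a) *\<^sub>v v = 0\<^sub>v n"
    by blast
  have "inK n k (\<lambda>j. v $ j)"
    unfolding inK_def
  proof (intro allI impI)
    fix i assume i: "i < n"
    have "(skewA n k (0::'a) *\<^sub>v v) $ i = 0" using v(3) i by simp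
    then show "rs n k 0 (\<lambda>j. v $ j) i = 0" using skewA_mult_vec[OF v(1) i] by simp
  qed
  then have "\<And>t. t < n \<Longrightarrow> v $ t = 0" using KZ[OF _ m3] by blast
  then have "v = 0\<^sub>v n" using v(1) by (intro eq_vecI) auto
  then show False using v(2) by simp
qed

end

definition Pm :: "nat \<Rightarrow> nat \<Rightarrow> nat \<Rightarrow> 'a::comm_ring_1 mat" where
  "Pm n k m = mat n n (\<lambda>(i,j). if j = n - 2 then kv m k 1 (-1) i
     else if j = n - 1 then kv m k 1 0 i else (if i = j then 1 else 0))"

definition Mm :: "nat \<Rightarrow> nat \<Rightarrow> nat \<Rightarrow> 'a::comm_ring_1 \<Rightarrow> 'a mat" where
  "Mm n k m x = mat n n (\<lambda>(i,j). if j = n - 2 then bs n k (kv m k 1 (-1)) i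
     else if j = n - 1 then bs n k (kv m k 1 0) i else ent k x i j)"

definition Dg :: "nat \<Rightarrow> 'a::comm_ring_1 \<Rightarrow> 'a mat" where
  "Dg n x = mat n n (\<lambda>(i,j). if i = j then (if n - 2 \<le> i then x else 1) else 0)"

lemma mult_mat_entry:
  assumes "i < n" "j < n"
  shows "(mat n n f * mat n n g) $$ (i, j) = (\<Sum>l<n. f (i, l) * g (l, j))"
  using assms by (simp add: scalar_prod_def lessThan_atLeast0)

lemma mult_entry:
  assumes "A \<in> carrier_mat n n" "B \<in> carrier_mat n n" "i < n" "j < n"
  shows "(A * B) $$ (i, j) = (\<Sum>l<n. A $$ (i, l) * B $$ (l, j))"
  using assms by (simp add: scalar_prod_def lessThan_atLeast0)

lemma sum_if_eq: "j < (n::nat) \<Longrightarrow> (\<Sum>l<n. f l * (if l = j then c else 0)) = f j * (c::'a::comm_ring_1)"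
proof -
  assume j: "j < n"
  have "(\<Sum>l<n. f l * (if l = j then c else 0)) = (\<Sum>l<n. if l = j then f j * c else 0)"
    by (rule sum.cong) auto
  also have "\<dots> = f j * c" using j by (subst sum.delta; simp)
  finally show ?thesis .
qed

lemma det_Dg:
  assumes n: "2 \<le> n"
  shows "det (Dg n x) = x ^ 2"
proof -
  have ut: "upper_triangular (Dg n x)" unfolding Dg_def upper_triangular_def by auto
  have "det (Dg n x) = (\<Prod>i = 0..<n. Dg n x $$ (i, i))"
    using det_upper_triangular[OF ut, of n] prod_list_diag_prod[of "Dg n x"] by (simp add: Dg_def)
  also have "\<dots> = (\<Prod>i<n. (if n - 2 \<le> i then x else 1))"
    by (simp add: Dg_def lessThan_atLeast0)
  also obtain n' where n': "n = Suc (Suc n')" using n by (metis add_2_eq_Suc le_Suc_ex)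
  have "(\<Prod>i<n. (if n - 2 \<le> i then x else 1)) = (\<Prod>i<n'. (if n' \<le> i then x else 1)) * x * x"
    unfolding n' by simp
  also have "(\<Prod>i<n'. (if n' \<le> i then x else 1)) = 1" by (rule prod.neutral) auto
  finally show ?thesis by (simp add: power2_eq_square)
qed

context cfg
begin

lemma n2: "3 \<le> n \<or> m = 0" using nkm k1 by auto

lemma det_Pm:
  assumes m3: "m mod 3 = 1"
  shows "det (Pm n k m :: 'a::comm_ring_1 mat) = 1"
proof -
  have m1: "1 \<le> m" using m3 by (rule mod3_1_pos)
  note L = kv_last[OF m1 m3]
  have nn: "n - 2 < n - 1" "n - 1 < n" using nkm k1 m1 by auto
  have ut: "upper_triangular (Pm n k m :: 'a mat)"
    unfolding upper_triangular_def
  proof (intro allI impI)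
    fix i j assume i: "i < dim_row (Pm n k m :: 'a mat)" and j: "j < i"
    then have i': "i < n" by (simp add: Pm_def)
    show "(Pm n k m :: 'a mat) $$ (i, j) = 0"
    proof (cases "j = n - 2")
      case True
      then have "i = n - 1" using i' j by arith
      have "kv m k (1::'a) (-1) (n - 1) = 0" using kv_last(1)[OF m1 m3, of "1::'a" "-1"] by simp
      then show ?thesis using True i' j \<open>i = n - 1\<close> nn by (simp add: Pm_def)
    next
      case False
      then show ?thesis using i' j nn by (simp add: Pm_def)
    qed
  qed
  have D1: "det (Pm n k m :: 'a mat) = (\<Prod>i = 0..<n. (Pm n k m :: 'a mat) $$ (i, i))"
    using det_upper_triangular[OF ut, of n] prod_list_diag_prod[of "Pm n k m :: 'a mat"]
    by (simp add: Pm_def)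
  have L1: "kv m k (1::'a) 0 (n - 1) = 1" using kv_last(1)[OF m1 m3, of "1::'a" 0] by simp
  have L2: "kv m k (1::'a) (-1) (n - 2) = 1" using kv_last(2)[OF m1 m3, of "1::'a" "-1"] by simp
  have "(\<Prod>i = 0..<n. (Pm n k m :: 'a mat) $$ (i, i)) = (\<Prod>i = 0..<n. 1)"
    by (rule prod.cong) (use L1 L2 nn in \<open>auto simp: Pm_def\<close>)
  then show ?thesis using D1 by simp
qed

lemma AP_eq:
  assumes m3: "m mod 3 = 1"
  shows "skewA n k x * Pm n k m = Mm n k m x * Dg n (x :: 'a::comm_ring_1)"
proof (rule eq_matI)
  have m1: "1 \<le> m" using m3 by (rule mod3_1_pos)
  have nn: "n - 2 < n - 1" "n - 1 < n" using nkm k1 m1 by auto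
  fix i j assume i: "i < dim_row (Mm n k m x * Dg n x)" and j: "j < dim_col (Mm n k m x * Dg n x)"
  then have i: "i < n" and j: "j < n" by (auto simp: Mm_def Dg_def)
  have L: "(skewA n k x * Pm n k m) $$ (i, j) = (\<Sum>l<n. ent k x i l * (Pm n k m :: 'a mat) $$ (l, j))"
    unfolding skewA_eq Pm_def using i j by (subst mult_mat_entry) (auto intro!: sum.cong)
  have R: "(Mm n k m x * Dg n x) $$ (i, j) = Mm n k m x $$ (i, j) * (if n - 2 \<le> j then x else 1)"
  proof -
    have "(Mm n k m x * Dg n x) $$ (i, j) = (\<Sum>l<n. Mm n k m x $$ (i, l) * Dg n x $$ (l, j))"
      by (rule mult_entry) (use i j in \<open>auto simp: Mm_def Dg_def\<close>)
    also have "\<dots> = (\<Sum>l<n. Mm n k m x $$ (i, l) * (if l = j then (if n - 2 \<le> j then x else 1) else 0))"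
      by (intro sum.cong refl) (use j in \<open>auto simp: Dg_def\<close>)
    also have "\<dots> = Mm n k m x $$ (i, j) * (if n - 2 \<le> j then x else 1)"
      by (rule sum_if_eq[OF j])
    finally show ?thesis .
  qed
  have K: "\<And>p q. inK n k (kv m k (p::'a) q)" using kv_in[OF m3] by blast
  have rsK: "\<And>p q. rs n k x (kv m k (p::'a) q) i = x * bs n k (kv m k p q) i"
    using K i unfolding inK_def by (subst rs_split) simp
  consider (a) "j = n - 2" | (b) "j = n - 1" | (c) "j < n - 2" using j by linarith
  then show "(skewA n k x * Pm n k m) $$ (i, j) = (Mm n k m x * Dg n x) $$ (i, j)"
  proof cases
    case a
    have "(skewA n k x * Pm n k m) $$ (i, j) = rs n k x (kv m k 1 (-1)) i"
      unfolding L rs_def using a j by (intro sum.cong) (auto simp: Pm_def)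
    then show ?thesis unfolding R rsK using a i j nn by (simp add: Mm_def)
  next
    case b
    have "(skewA n k x * Pm n k m) $$ (i, j) = rs n k x (kv m k 1 0) i"
      unfolding L rs_def using b j nn by (intro sum.cong) (auto simp: Pm_def)
    then show ?thesis unfolding R rsK using b i j nn by (simp add: Mm_def)
  next
    case c
    have "(skewA n k x * Pm n k m) $$ (i, j) = (\<Sum>l<n. ent k x i l * (if l = j then 1 else 0))"
      unfolding L using c j by (intro sum.cong) (auto simp: Pm_def)
    also have "\<dots> = ent k x i j" using sum_if_eq[OF j, of "ent k x i" 1] by simp
    moreover have "j \<noteq> n - 1" "j \<noteq> n - 2" using c nn by auto
    ultimately show ?thesis unfolding R using c i j by (simp add: Mm_def)
  qed
qed (auto simp: Mm_def Dg_def Pm_def skewA_eq)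

end

lemma kdim_zero: "kernel.dim n (0\<^sub>m n n :: 'a::field mat) = n"
proof -
  interpret V: vec_space "TYPE('a)" n .
  have mk: "mat_kernel (0\<^sub>m n n :: 'a mat) = carrier_vec n" by (auto simp: mat_kernel_def)
  have e: "(module_vec TYPE('a) n)\<lparr>carrier := carrier_vec n\<rparr> = module_vec TYPE('a) n"
    by (simp add: module_vec_def)
  show ?thesis unfolding mk e using V.dim_is_n .
qed

lemma skew_rs: "(\<Sum>i<n. f i * rs n k 0 g i) = - (\<Sum>j<n. g j * rs n k 0 f j)"
  unfolding rs_def by (rule skew_sum) (rule ent_skew)

lemma skew_bs: "(\<Sum>i<n. f i * bs n k g i) = - (\<Sum>j<n. g j * bs n k f j)"
  unfolding bs_def by (rule skew_sum) (rule bent_skew)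

context cfg
begin

lemma detM0:
  assumes m3: "m mod 3 = 1"
  shows "det (Mm n k m (0::int)) \<noteq> 0"
proof
  have m1: "1 \<le> m" using m3 by (rule mod3_1_pos)
  have nn: "n - 2 < n - 1" "n - 1 < n" using nkm k1 m1 by auto
  let ?M = "Mm n k m (0::int)"
  let ?K1 = "kv m k (1::int) (-1)" and ?K2 = "kv m k (1::int) 0"
  assume "det ?M = 0"
  moreover have iff: "det ?M = 0 \<longleftrightarrow>
    (\<exists>v. v \<in> carrier_vec n \<and> v \<noteq> 0\<^sub>v n \<and> ?M *\<^sub>v v = 0\<^sub>v n)"
    by (rule det_0_iff_vec_prod_zero) (simp add: Mm_def)
  ultimately have "\<exists>v. v \<in> carrier_vec n \<and> v \<noteq> 0\<^sub>v n \<and> ?M *\<^sub>v v = 0\<^sub>v n"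
    by blast
  then obtain v where v: "v \<in> carrier_vec n" "v \<noteq> 0\<^sub>v n" "?M *\<^sub>v v = 0\<^sub>v n"
    by blast
  define a where "a = v $ (n - 2)"
  define b where "b = v $ (n - 1)"
  define w where "w = (\<lambda>t. if t < n - 2 then v $ t else (0::int))"
  have Mv: "rs n k 0 w i + a * bs n k ?K1 i + b * bs n k ?K2 i = 0" if i: "i < n" for i
  proof -
    have "(?M *\<^sub>v v) $ i = (\<Sum>l<n. ?M $$ (i, l) * v $ l)"
      using v(1) i by (simp add: Mm_def scalar_prod_def lessThan_atLeast0)
    also have "\<dots> = (\<Sum>l<n. ent k 0 i l * w l + (if l = n - 2 then a * bs n k ?K1 i else 0)
        + (if l = n - 1 then b * bs n k ?K2 i else 0))"
    proof (intro sum.cong refl)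
      fix l assume l: "l \<in> {..<n}"
      consider (x) "l = n - 2" | (y) "l = n - 1" | (z) "l < n - 2" using l by force
      then show "?M $$ (i, l) * v $ l = ent k 0 i l * w l + (if l = n - 2 then a * bs n k ?K1 i else 0)
        + (if l = n - 1 then b * bs n k ?K2 i else 0)"
        by cases (use i l nn in \<open>auto simp: Mm_def w_def a_def b_def\<close>)
    qed
    also have "\<dots> = rs n k 0 w i + a * bs n k ?K1 i + b * bs n k ?K2 i"
      unfolding rs_def sum.distrib using nn by (simp add: sum.delta)
    finally show ?thesis using v(3) i by simp
  qed
  have Ksum: "(\<Sum>i<n. u i * rs n k 0 w i) + a * (\<Sum>i<n. u i * bs n k ?K1 i)
      + b * (\<Sum>i<n. u i * bs n k ?K2 i) = 0" for u
  proof -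
    have "(\<Sum>i<n. u i * rs n k 0 w i) + a * (\<Sum>i<n. u i * bs n k ?K1 i)
      + b * (\<Sum>i<n. u i * bs n k ?K2 i) =
      (\<Sum>i<n. u i * (rs n k 0 w i + a * bs n k ?K1 i + b * bs n k ?K2 i))"
      by (simp add: sum.distrib sum_distrib_left algebra_simps)
    also have "\<dots> = 0" using Mv by simp
    finally show ?thesis .
  qed
  have KK: "\<And>p q. inK n k (kv m k (p::int) q)" using kv_in[OF m3] by blast
  have R0: "(\<Sum>i<n. kv m k p q i * rs n k 0 w i) = 0" for p q :: int
  proof -
    have "(\<Sum>i<n. kv m k p q i * rs n k 0 w i) = - (\<Sum>j<n. w j * rs n k 0 (kv m k p q) j)"
      by (rule skew_rs)
    also have "\<dots> = 0" using KK[of p q] unfolding inK_def by simp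
    finally show ?thesis .
  qed
  have self: "(\<Sum>i<n. f i * bs n k f i) = 0" for f :: "nat \<Rightarrow> int"
    using skew_bs[where f=f and g=f and n=n and k=k] by simp
  define c where "c = (\<Sum>i<n. ?K1 i * bs n k ?K2 i)"
  have c: "c < 0" unfolding c_def by (rule c_neg[OF m3])
  have c2: "(\<Sum>i<n. ?K2 i * bs n k ?K1 i) = - c" unfolding c_def by (rule skew_bs)
  have "b * c = 0" using Ksum[of ?K1] R0[of 1 "-1"] self[of ?K1] unfolding c_def by simp
  then have b0: "b = 0" using c by simp
  have "a * c = 0" using Ksum[of ?K2] R0[of 1 0] self[of ?K2] c2 by simp
  then have a0: "a = 0" using c by simp
  have wK: "inK n k w" unfolding inK_def using Mv a0 b0 by simp
  have w0: "\<And>t. t < n \<Longrightarrow> w t = 0"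
    by (rule KL[OF wK m3]) (use nn in \<open>auto simp: w_def\<close>)
  have "v = 0\<^sub>v n"
  proof (rule eq_vecI)
    fix t assume "t < dim_vec (0\<^sub>v n :: int vec)"
    then have t: "t < n" by simp
    consider (x) "t = n - 2" | (y) "t = n - 1" | (z) "t < n - 2" using t by force
    then show "v $ t = 0\<^sub>v n $ t"
      by cases (use t a0 b0 w0[OF t] in \<open>auto simp: a_def b_def w_def\<close>)
  qed (use v(1) in simp)
  then show False using v(2) by simp
qed

end

context cfg
begin

lemma AP0:
  assumes m3: "m mod 3 = 1"
  shows "skewA n k 0 * Pm n k m = mat n n (\<lambda>(i,j). if j < n - 2 then ent k 0 i j else (0::'a::comm_ring_1))"
proof (rule eq_matI)
  fix i j assume "i < dim_row (mat n n (\<lambda>(i,j). if j < n - 2 then ent k 0 i j else (0::'a)))"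
    "j < dim_col (mat n n (\<lambda>(i,j). if j < n - 2 then ent k 0 i j else (0::'a)))"
  then have i: "i < n" and j: "j < n" by auto
  have AE: "skewA n k (0::'a) * Pm n k m = Mm n k m 0 * Dg n 0" by (rule AP_eq[OF m3])
  have "(skewA n k 0 * Pm n k m) $$ (i, j) = (Mm n k m 0 * Dg n (0::'a)) $$ (i, j)"
    unfolding AE ..
  also have "\<dots> = (\<Sum>l<n. Mm n k m 0 $$ (i, l) * Dg n (0::'a) $$ (l, j))"
    by (rule mult_entry) (use i j in \<open>auto simp: Mm_def Dg_def\<close>)
  also have "\<dots> = (\<Sum>l<n. Mm n k m 0 $$ (i, l) * (if l = j then (if n - 2 \<le> j then 0 else 1) else 0))"
    by (intro sum.cong refl) (use j in \<open>auto simp: Dg_def\<close>)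
  also have "\<dots> = Mm n k m 0 $$ (i, j) * (if n - 2 \<le> j then 0 else 1)"
    by (rule sum_if_eq[OF j])
  also have "\<dots> = (if j < n - 2 then ent k 0 i j else 0)"
    using i j by (auto simp: Mm_def)
  finally show "(skewA n k 0 * Pm n k m) $$ (i, j) =
    mat n n (\<lambda>(i,j). if j < n - 2 then ent k 0 i j else (0::'a)) $$ (i, j)" using i j by simp
qed (auto simp: Pm_def skewA_eq)

lemma Cdet:
  assumes m3: "m mod 3 = 1"
  shows "det (mat (n - 2) (n - 2) (\<lambda>(i,j). ent k 0 i j) :: rat mat) \<noteq> 0"
proof
  have m1: "1 \<le> m" using m3 by (rule mod3_1_pos)
  have nn: "n - 2 < n - 1" "n - 1 < n" using nkm k1 m1 by auto
  obtain n' where n': "n = Suc (Suc n')" using nn by (metis Suc_diff_Suc diff_Suc_1 less_imp_Suc_add zero_less_diff)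
  let ?C = "mat (n - 2) (n - 2) (\<lambda>(i,j). ent k 0 i j) :: rat mat"
  assume "det ?C = 0"
  moreover have iff: "det ?C = 0 \<longleftrightarrow>
    (\<exists>v. v \<in> carrier_vec (n - 2) \<and> v \<noteq> 0\<^sub>v (n - 2) \<and> ?C *\<^sub>v v = 0\<^sub>v (n - 2))"
    by (rule det_0_iff_vec_prod_zero) simp
  ultimately have "\<exists>v. v \<in> carrier_vec (n - 2) \<and> v \<noteq> 0\<^sub>v (n - 2) \<and> ?C *\<^sub>v v = 0\<^sub>v (n - 2)"
    by blast
  then obtain u where u: "u \<in> carrier_vec (n - 2)" "u \<noteq> 0\<^sub>v (n - 2)" "?C *\<^sub>v u = 0\<^sub>v (n - 2)"
    by blast
  define w where "w = (\<lambda>t. if t < n - 2 then u $ t else (0::rat))"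
  have low: "rs n k 0 w i = 0" if i: "i < n - 2" for i
  proof -
    have "rs n k 0 w i = (\<Sum>l<n - 2. ent k 0 i l * w l)"
      unfolding rs_def by (rule sum.mono_neutral_right) (auto simp: w_def)
    also have "\<dots> = (\<Sum>l<n - 2. ent k 0 i l * u $ l)"
      by (intro sum.cong refl) (auto simp: w_def)
    also have "\<dots> = (?C *\<^sub>v u) $ i"
      using u(1) i by (simp add: scalar_prod_def lessThan_atLeast0)
    also have "\<dots> = 0" using u(3) i by simp
    finally show ?thesis .
  qed
  have KK: "\<And>p q. inK n k (kv m k (p::rat) q)" using kv_in[OF m3] by blast
  have top: "kv m k p q (n - 2) * rs n k 0 w (n - 2) + kv m k p q (n - 1) * rs n k 0 w (n - 1) = 0"
    for p q :: rat
  proof -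
    have "(\<Sum>i<n. kv m k p q i * rs n k 0 w i) = - (\<Sum>j<n. w j * rs n k 0 (kv m k p q) j)"
      by (rule skew_rs)
    also have "\<dots> = 0" using KK[of p q] unfolding inK_def by simp
    finally have "(\<Sum>i<n. kv m k p q i * rs n k 0 w i) = 0" .
    moreover have "(\<Sum>i<n. kv m k p q i * rs n k 0 w i) =
      (\<Sum>i<n'. kv m k p q i * rs n k 0 w i) + kv m k p q (n - 2) * rs n k 0 w (n - 2)
      + kv m k p q (n - 1) * rs n k 0 w (n - 1)"
      unfolding n' by simp
    moreover have "(\<Sum>i<n'. kv m k p q i * rs n k 0 w i) = 0"
      using low n' by simp
    ultimately show ?thesis by simp
  qed
  have L1: "kv m k (1::rat) (-1) (n - 1) = 0" "kv m k (1::rat) (-1) (n - 2) = 1"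
    using kv_last[OF m1 m3, of "1::rat" "-1"] by simp_all
  have L2: "kv m k (1::rat) 0 (n - 1) = 1" "kv m k (1::rat) 0 (n - 2) = 0"
    using kv_last[OF m1 m3, of "1::rat" 0] by simp_all
  have t1: "rs n k 0 w (n - 2) = 0" using top[of 1 "-1"] L1 by simp
  have t2: "rs n k 0 w (n - 1) = 0" using top[of 1 0] L2 by simp
  have wK: "inK n k w" unfolding inK_def
  proof (intro allI impI)
    fix i assume "i < n"
    then consider "i < n - 2" | "i = n - 2" | "i = n - 1" by linarith
    then show "rs n k 0 w i = 0" by cases (use low t1 t2 in auto)
  qed
  have w0: "\<And>t. t < n \<Longrightarrow> w t = 0"
    by (rule KL[OF wK m3]) (use nn in \<open>auto simp: w_def\<close>)
  have "u = 0\<^sub>v (n - 2)"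
  proof (rule eq_vecI)
    fix t assume "t < dim_vec (0\<^sub>v (n - 2) :: rat vec)"
    then have t: "t < n - 2" by simp
    then show "u $ t = 0\<^sub>v (n - 2) $ t" using w0[of t] by (simp add: w_def)
  qed (use u(1) in simp)
  then show False using u(2) by simp
qed

lemma N2:
  assumes m3: "m mod 3 = 1"
  shows "kernel.dim n (skewA n k (0::rat)) = 2"
proof -
  have m1: "1 \<le> m" using m3 by (rule mod3_1_pos)
  have nn: "n - 2 < n - 1" "n - 1 < n" using nkm k1 m1 by auto
  let ?A = "skewA n k (0::rat)" and ?P = "Pm n k m :: rat mat"
  have A: "?A \<in> carrier_mat n n" by simp
  have P: "?P \<in> carrier_mat n n" by (simp add: Pm_def)
  have dP: "det ?P \<noteq> 0" using det_Pm[OF m3, where 'a=rat] by simp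
  from det_non_zero_imp_unit[OF P dP, unfolded Units_def, of "()"]
  obtain B where B: "B \<in> carrier_mat n n" and BP: "B * ?P = 1\<^sub>m n" and PB: "?P * B = 1\<^sub>m n"
    by (auto simp: ring_mat_def)
  have e1: "kernel.dim n (?A * ?P) = kernel.dim n ?A"
    by (rule mat_kernel_dim_mult_eq_right[OF A P B PB])
  have AP: "?A * ?P \<in> carrier_mat n n" by (rule mult_carrier_mat[OF A P])
  have TT: "transpose_mat B * transpose_mat ?P = 1\<^sub>m n"
    using transpose_mult[OF P B] PB by simp
  have e2: "mat_kernel (transpose_mat ?P * (?A * ?P)) = mat_kernel (?A * ?P)"
    by (rule mat_kernel_mult_eq[OF AP _ _ TT]) (use P B in auto)
  let ?C = "mat (n - 2) (n - 2) (\<lambda>(i,j). ent k 0 i j) :: rat mat"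
  have Q: "transpose_mat ?P * (?A * ?P) = four_block_mat ?C (0\<^sub>m (n - 2) 2) (0\<^sub>m 2 (n - 2)) (0\<^sub>m 2 2)"
  proof (rule eq_matI)
    fix i j assume "i < dim_row (four_block_mat ?C (0\<^sub>m (n - 2) 2) (0\<^sub>m 2 (n - 2)) (0\<^sub>m 2 2))"
      "j < dim_col (four_block_mat ?C (0\<^sub>m (n - 2) 2) (0\<^sub>m 2 (n - 2)) (0\<^sub>m 2 2))"
    then have i: "i < n" and j: "j < n" using nn by auto
    have "(transpose_mat ?P * (?A * ?P)) $$ (i, j) = (\<Sum>l<n. ?P $$ (l, i) * (?A * ?P) $$ (l, j))"
      by (subst mult_entry[of _ n]) (use i j P AP in auto)
    also have "\<dots> = (\<Sum>l<n. ?P $$ (l, i) * (if j < n - 2 then ent k 0 l j else 0))"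
      by (intro sum.cong refl) (use j in \<open>auto simp: AP0[OF m3]\<close>)
    also have "\<dots> = (if i < n - 2 \<and> j < n - 2 then ent k 0 i j else 0)"
    proof (cases "j < n - 2")
      case False then show ?thesis by simp
    next
      case jj: True
      consider (x) "i < n - 2" | (y) "i = n - 2" | (z) "i = n - 1" using i by linarith
      then show ?thesis
      proof cases
        case x
        have "(\<Sum>l<n. ?P $$ (l, i) * ent k 0 l j) = (\<Sum>l<n. ent k 0 l j * (if l = i then 1 else 0))"
          by (intro sum.cong refl) (use x nn in \<open>auto simp: Pm_def\<close>)
        also have "\<dots> = ent k 0 i j" using sum_if_eq[OF i, of "\<lambda>l. ent k 0 l j" 1] by simp
        finally show ?thesis using x jj by simp
      next
        case y
        have "(\<Sum>l<n. ?P $$ (l, i) * ent k 0 l j) = (\<Sum>l<n. kv m k 1 (-1) l * ent k 0 l j)"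
          by (intro sum.cong refl) (use y in \<open>auto simp: Pm_def\<close>)
        also have "\<dots> = - rs n k 0 (kv m k 1 (-1)) j"
          unfolding rs_def by (subst ent_skew) (simp add: sum_negf algebra_simps)
        also have "\<dots> = 0" using kv_in[OF m3, where 'a=rat, of 1 "-1"] j unfolding inK_def by simp
        finally show ?thesis using y jj nn by simp
      next
        case z
        have "(\<Sum>l<n. ?P $$ (l, i) * ent k 0 l j) = (\<Sum>l<n. kv m k 1 0 l * ent k 0 l j)"
          by (intro sum.cong refl) (use z nn in \<open>auto simp: Pm_def\<close>)
        also have "\<dots> = - rs n k 0 (kv m k 1 0) j"
          unfolding rs_def by (subst ent_skew) (simp add: sum_negf algebra_simps)
        also have "\<dots> = 0" using kv_in[OF m3, where 'a=rat, of 1 0] j unfolding inK_def by simp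
        finally show ?thesis using z jj nn by simp
      qed
    qed
    also have "\<dots> = four_block_mat ?C (0\<^sub>m (n - 2) 2) (0\<^sub>m 2 (n - 2)) (0\<^sub>m 2 2) $$ (i, j)"
    proof -
      have "i < n - 2 + 2" "j < n - 2 + 2" using i j nn by auto
      then show ?thesis by (subst index_mat_four_block) auto
    qed
    finally show "(transpose_mat ?P * (?A * ?P)) $$ (i, j) =
      four_block_mat ?C (0\<^sub>m (n - 2) 2) (0\<^sub>m 2 (n - 2)) (0\<^sub>m 2 2) $$ (i, j)" .
  qed (use nn P in auto)
  have fb: "kernel.dim (n - 2 + 2) (transpose_mat ?P * (?A * ?P)) =
      kernel.dim (n - 2) ?C + kernel.dim 2 (0\<^sub>m 2 2 :: rat mat)"
    by (rule kernel_four_block_0_mat[OF Q]) auto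
  have c0: "kernel.dim (n - 2) ?C = 0"
    by (rule det_nz_kernel_dim[OF _ Cdet[OF m3]]) simp
  have n22: "n - 2 + 2 = n" using nn by simp
  have "kernel.dim n ?A = kernel.dim n (?A * ?P)" using e1 by simp
  also have "\<dots> = kernel.dim n (transpose_mat ?P * (?A * ?P))" unfolding e2 ..
  also have "\<dots> = 2" using fb c0 kdim_zero[of 2] unfolding n22 by simp
  finally show ?thesis .
qed

end

lemma (in comm_ring_hom) map_Mm: "map_mat hom (Mm n k m x) = Mm n k m (hom x)"
  unfolding Mm_def by (rule eq_matI) (auto simp: hom_bs hom_kv hom_ent hom_distribs)

interpretation ev0: comm_ring_hom "\<lambda>p::int poly. poly p 0"
  by unfold_locales auto

lemma poly_det0: "poly (det (A :: int poly mat)) 0 = det (map_mat (\<lambda>p. poly p 0) A)"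
  by (simp add: ev0.hom_det)

theorem theorem9p2:
  fixes \<nu> k :: nat
  assumes "\<nu> \<ge> 2" and "\<nu> - 1 \<le> k" and "k \<le> 2 * \<nu> - 1"
  shows "D (2 * \<nu>) k \<noteq> 0 \<and> order 0 (D (2 * \<nu>) k) = N (2 * \<nu>) k"
proof -
  define n where "n = 2 * \<nu>"
  define m where "m = n - 1 - k"
  have nkm: "n = k + 1 + m" using assms unfolding n_def m_def by simp
  have par: "odd (k + m)"
  proof -
    have "k + m = 2 * (\<nu> - 1) + 1" using assms unfolding n_def m_def by simp
    then show ?thesis by simp
  qed
  interpret cfg n k m
    by unfold_locales (use assms nkm par in \<open>auto simp: n_def m_def\<close>)
  let ?X = "[:0, 1:] :: int poly"
  have Ddef: "D n k = det (skewA n k ?X)" by (simp add: D_def)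
  have Ndef: "N n k = kernel.dim n (skewA n k (0::rat))"
    unfolding N_def by (rule kernel_dim_eq) simp
  have pX: "poly ?X 0 = 0" by simp
  have "D n k \<noteq> 0 \<and> order 0 (D n k) = N n k"
  proof (cases "m mod 3 = 1")
    case False
    have "poly (D n k) 0 = det (skewA n k (0::int))"
      unfolding Ddef poly_det0 ev0.map_skewA pX ..
    then have p0: "poly (D n k) 0 \<noteq> 0" using det_A0_nz[OF False, where 'a=int] by simp
    then have D0: "D n k \<noteq> 0" by auto
    have o0: "order 0 (D n k) = 0" using p0 order_root by blast
    have "N n k = 0" unfolding Ndef
      by (rule det_nz_kernel_dim[OF _ det_A0_nz[OF False, where 'a=rat]]) simp
    then show ?thesis using D0 o0 by simp
  next
    case True
    have m1: "1 \<le> m" using True by (rule mod3_1_pos)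
    have n2: "2 \<le> n" using nkm k1 by simp
    have e: "skewA n k ?X * Pm n k m = Mm n k m ?X * Dg n ?X" by (rule AP_eq[OF True])
    have "det (skewA n k ?X * Pm n k m) = det (skewA n k ?X) * det (Pm n k m :: int poly mat)"
      by (rule det_mult) (auto simp: Pm_def)
    also have "det (Pm n k m :: int poly mat) = 1" by (rule det_Pm[OF True])
    finally have l: "det (skewA n k ?X * Pm n k m) = D n k" unfolding Ddef by simp
    have "det (Mm n k m ?X * Dg n ?X) = det (Mm n k m ?X) * det (Dg n ?X)"
      by (rule det_mult) (auto simp: Mm_def Dg_def)
    also have "det (Dg n ?X) = ?X ^ 2" by (rule det_Dg[OF n2])
    finally have DD: "D n k = det (Mm n k m ?X) * ?X ^ 2" using l e by simp
    have "poly (det (Mm n k m ?X)) 0 = det (Mm n k m (0::int))"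
      unfolding poly_det0 ev0.map_Mm pX ..
    then have q0: "poly (det (Mm n k m ?X)) 0 \<noteq> 0" using detM0[OF True] by simp
    then have qnz: "det (Mm n k m ?X) \<noteq> 0" by auto
    have oq: "order 0 (det (Mm n k m ?X)) = 0" using q0 order_root by blast
    have Xnz: "?X ^ 2 \<noteq> 0" by simp
    have D0: "D n k \<noteq> 0" unfolding DD using qnz Xnz by simp
    have oX: "order 0 (?X ^ 2) = 2" using order_power_n_n[of 0 2] by simp
    have "order 0 (D n k) = 2" unfolding DD using order_mult[of "det (Mm n k m ?X)" "?X ^ 2" 0]
      qnz Xnz oq oX by simp
    moreover have "N n k = 2" unfolding Ndef by (rule N2[OF True])
    ultimately show ?thesis using D0 by simp
  qed
  then show ?thesis unfolding n_def .
qed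

end
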